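(* Let $C$ be a linear code over $\mathbb{Z}_4$ of length $n$ and type $4^{k_1}2^{k_2}$, with generator matrix $G\in\mathbb{Z}_4^{(k_1+k_2)\times n}$. If no column of $G$ lies in $(2\mathbb{Z}_4)^{k_1+k_2}$, then $$\sum_{\mathbf{x}\in(2\mathbb{Z}_4)^{k_1+k_2}\setminus\{\mathbf{0}\}}w_L(\mathbf{x}G)=2^{k_1+k_2}n.$$
   Context: A linear code of length $n$ over $\mathbb{Z}_4$ is a $\mathbb{Z}_4$-submodule of $\mathbb{Z}_4^n$, of type $4^{k_1}2^{k_2}$ if isomorphic to $\mathbb{Z}_4^{k_1}\times\mathbb{Z}_2^{k_2}$. A generator matrix is a matrix whose rows generate the code and no proper subset of whose rows does. $2\mathbb{Z}_4=\{0,2\}$. Lee weight: $w_L(0)=0,w_L(1)=1,w_L(2)=2,w_L(3)=1$, additive on vectors. *)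

theory Defs
  imports Main "HOL-Library.Numeral_Type"
begin

text \<open>Z4 is the library type 4 (integers mod 4). Vectors of length n are lists of length n.\<close>

definition vec_add :: "4 list \<Rightarrow> 4 list \<Rightarrow> 4 list" where
  "vec_add u v = map2 (+) u v"

definition vec_smult :: "4 \<Rightarrow> 4 list \<Rightarrow> 4 list" where
  "vec_smult r v = map ((*) r) v"

definition z4_linear_code :: "nat \<Rightarrow> 4 list set \<Rightarrow> bool" where
  "z4_linear_code n C \<longleftrightarrow>
     C \<subseteq> {v. length v = n} \<and> replicate n 0 \<in> C \<and>
     (\<forall>u\<in>C. \<forall>v\<in>C. vec_add u v \<in> C) \<and>
     (\<forall>r. \<forall>v\<in>C. vec_smult r v \<in> C)"

text \<open>The Z4-module Z4^k1 x Z2^k2, with Z2 realised as the Z4-module 2Z4 = {0,2}.\<close>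
definition type_module :: "nat \<Rightarrow> nat \<Rightarrow> 4 list set" where
  "type_module k1 k2 = {xs @ ys | xs ys. length xs = k1 \<and> length ys = k2 \<and> set ys \<subseteq> {0, 2}}"

definition has_type :: "4 list set \<Rightarrow> nat \<Rightarrow> nat \<Rightarrow> bool" where
  "has_type C k1 k2 \<longleftrightarrow>
     (\<exists>f. bij_betw f C (type_module k1 k2) \<and>
          (\<forall>u\<in>C. \<forall>v\<in>C. f (vec_add u v) = vec_add (f u) (f v)) \<and>
          (\<forall>r. \<forall>v\<in>C. f (vec_smult r v) = vec_smult r (f v)))"

definition lin_comb :: "nat \<Rightarrow> 4 list list \<Rightarrow> nat set \<Rightarrow> (nat \<Rightarrow> 4) \<Rightarrow> 4 list" where
  "lin_comb n G I c = map (\<lambda>j. \<Sum>i\<in>I. c i * G ! i ! j) [0..<n]"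

definition row_span :: "nat \<Rightarrow> 4 list list \<Rightarrow> nat set \<Rightarrow> 4 list set" where
  "row_span n G I = {lin_comb n G I c | c. True}"

definition generator_matrix :: "nat \<Rightarrow> 4 list list \<Rightarrow> 4 list set \<Rightarrow> bool" where
  "generator_matrix n G C \<longleftrightarrow>
     (\<forall>r\<in>set G. length r = n) \<and>
     row_span n G {..<length G} = C \<and>
     (\<forall>I. I \<subset> {..<length G} \<longrightarrow> row_span n G I \<noteq> C)"

definition vec_mat :: "nat \<Rightarrow> 4 list \<Rightarrow> 4 list list \<Rightarrow> 4 list" where
  "vec_mat n x G = lin_comb n G {..<length G} (\<lambda>i. x ! i)"

definition lee_weight :: "4 \<Rightarrow> nat" where
  "lee_weight a = (if a = 0 then 0 else if a = 2 then 2 else 1)"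

definition lee_weight_vec :: "4 list \<Rightarrow> nat" where
  "lee_weight_vec v = sum_list (map lee_weight v)"

end

theory Submission
  imports Defs
begin
lemma ex4: "(a::4) = 0 \<or> a = 1 \<or> a = 2 \<or> a = 3"
proof (cases a)
  case (of_int z)
  then have "z = 0 \<or> z = 1 \<or> z = 2 \<or> z = 3" by auto
  then show ?thesis using of_int by auto
qed
lemma lee2: "lee_weight a + lee_weight (a+2) = 2"
  using ex4[of a] by (auto simp: lee_weight_def)
lemma c2: "(2::4) * g = 2 \<or> g \<in> {0,2}"
  using ex4[of g] by auto
lemma add22: "(a::4) + 2 + 2 = a"
  using ex4[of a] by auto
lemma card_S: "card {x::4 list. length x = k \<and> set x \<subseteq> {0, 2}} = 2 ^ k"
proof -
  have "{x::4 list. length x = k \<and> set x \<subseteq> {0, 2}} = {x. set x \<subseteq> {0, 2} \<and> length x = k}" by auto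
  then show ?thesis by (simp add: card_lists_length_eq numeral_2_eq_2)
qed
lemma fin_S: "finite {x::4 list. length x = k \<and> set x \<subseteq> {0, 2}}"
proof -
  have "{x::4 list. length x = k \<and> set x \<subseteq> {0, 2}} = {x. set x \<subseteq> {0, 2} \<and> length x = k}" by auto
  then show ?thesis by (simp add: finite_lists_length_eq)
qed

lemma col:
  assumes i0: "i0 < k" and g: "G!i0!j \<notin> {0::4,2}"
  shows "(\<Sum>x\<in>{x. length x = k \<and> set x \<subseteq> {0,2}}. lee_weight (\<Sum>i<k. x!i * G!i!j)) = 2^k"
proof -
  define S where "S = {x::4 list. length x = k \<and> set x \<subseteq> {0,2}}"
  define v where "v x = (\<Sum>i<k. x!i * G!i!j)" for x :: "4 list"
  define t where "t x = x[i0 := x!i0 + 2]" for x :: "4 list"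
  have tS: "t x \<in> S" if "x \<in> S" for x
  proof -
    have "x!i0 \<in> {0,2}" using that i0 unfolding S_def by (auto dest!: nth_mem)
    then have "x!i0 + 2 \<in> {0,2}" by auto
    then show ?thesis using that unfolding S_def t_def
      by (auto dest!: set_update_subset_insert[THEN subsetD])
  qed
  have tt: "t (t x) = x" if "x \<in> S" for x
    using that i0 unfolding S_def t_def by (simp add: add22)
  have bij: "bij_betw t S S"
    by (rule bij_betw_byWitness[where f'=t]) (use tS tt in auto)
  have vt: "v (t x) = v x + 2" if "x \<in> S" for x
  proof -
    have len: "length x = k" using that unfolding S_def by auto
    have "v (t x) = (t x)!i0 * G!i0!j + (\<Sum>i\<in>{..<k} - {i0}. (t x)!i * G!i!j)"
      unfolding v_def using i0 by (simp add: sum.remove)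
    also have "(\<Sum>i\<in>{..<k} - {i0}. (t x)!i * G!i!j) = (\<Sum>i\<in>{..<k} - {i0}. x!i * G!i!j)"
      unfolding t_def by (rule sum.cong) auto
    also have "(t x)!i0 = x!i0 + 2" unfolding t_def using len i0 by simp
    also have "(x!i0 + 2) * G!i0!j = x!i0 * G!i0!j + 2" using c2[of "G!i0!j"] g
      by (simp add: distrib_right)
    finally show ?thesis unfolding v_def using i0
      by (simp add: sum.remove ac_simps)
  qed
  have "(\<Sum>x\<in>S. lee_weight (v x)) = (\<Sum>x\<in>S. lee_weight (v (t x)))"
    using sum.reindex_bij_betw[OF bij, of "\<lambda>x. lee_weight (v x)"] by simp
  then have "2 * (\<Sum>x\<in>S. lee_weight (v x)) = (\<Sum>x\<in>S. lee_weight (v x) + lee_weight (v (t x)))"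
    by (simp add: sum.distrib)
  also have "\<dots> = (\<Sum>x\<in>S. 2)" by (rule sum.cong) (auto simp: vt lee2)
  also have "\<dots> = 2 * 2^k" using card_S[of k] unfolding S_def by simp
  finally show ?thesis unfolding S_def v_def by simp
qed

theorem corollary3p6:
  fixes n k1 k2 :: nat and C :: "4 list set" and G :: "4 list list"
  assumes "z4_linear_code n C"
    and "has_type C k1 k2"
    and "length G = k1 + k2"
    and "generator_matrix n G C"
    and "\<forall>j<n. \<not> (\<forall>i<k1 + k2. G ! i ! j \<in> {0, 2})"
  shows "(\<Sum>x \<in> {x. length x = k1 + k2 \<and> set x \<subseteq> {0, 2}} - {replicate (k1 + k2) 0}.
            lee_weight_vec (vec_mat n x G)) = 2 ^ (k1 + k2) * n"
proof -
  define k where "k = k1 + k2"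
  define S where "S = {x::4 list. length x = k \<and> set x \<subseteq> {0,2}}"
  have f: "lee_weight_vec (vec_mat n x G) = (\<Sum>j<n. lee_weight (\<Sum>i<k. x!i * G!i!j))" for x
    unfolding lee_weight_vec_def vec_mat_def lin_comb_def k_def assms(3)
    by (simp add: sum_set_upt_conv_sum_list_nat[symmetric] atLeast0LessThan)
  have z: "lee_weight_vec (vec_mat n (replicate k 0) G) = 0"
    unfolding f by (simp add: lee_weight_def)
  have "(\<Sum>x \<in> S - {replicate k 0}. lee_weight_vec (vec_mat n x G))
      = (\<Sum>x \<in> S. lee_weight_vec (vec_mat n x G))"
  proof -
    have "replicate k 0 \<in> S" unfolding S_def by (cases "k = 0") auto
    with fin_S[of k] have "(\<Sum>x\<in>S. lee_weight_vec (vec_mat n x G)) = lee_weight_vec (vec_mat n (replicate k 0) G) + (\<Sum>x \<in> S - {replicate k 0}. lee_weight_vec (vec_mat n x G))"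
      unfolding S_def by (rule sum.remove)
    then show ?thesis using z by simp
  qed
  also have "\<dots> = (\<Sum>j<n. \<Sum>x\<in>S. lee_weight (\<Sum>i<k. x!i * G!i!j))"
    unfolding f by (rule sum.swap)
  also have "\<dots> = (\<Sum>j<n. 2^k)"
  proof (rule sum.cong)
    fix j assume "j \<in> {..<n}"
    then obtain i0 where "i0 < k" "G!i0!j \<notin> {0,2}" using assms(5) k_def by auto
    then show "(\<Sum>x\<in>S. lee_weight (\<Sum>i<k. x!i * G!i!j)) = 2^k"
      unfolding S_def by (rule col)
  qed simp
  finally show ?thesis unfolding S_def k_def by simp
qed
end
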